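(* Let $\Delta$ be a simplicial complex of subsets of $\{1,\dots,n\}$ and let $f=X_\alpha X_\beta-X_\gamma X_\delta\in Q_\Delta$ be a binomial such that $X_\alpha$ and $X_\gamma$ are both entries of the same margin $\mathscr J\in\Delta$ (i.e. $\{j:\alpha_j\neq\bullet\}=\{j:\gamma_j\ne\bullet\}=\mathscr J$), and let $\mathcal K=\{j:\beta_j\ne\bullet\}$ be the margin of which $X_\beta$ is an entry. Then $L_{\mathscr J\cap\mathcal K}\cdot\tau_\Delta(f)\subseteq I_\Delta$.
   Context: $\mathbb K$ is a field, $a_1,\dots,a_n$ positive integers, $R=\mathbb K[x_{i_1,\dots,i_n}:1\le i_j\le a_j]$, $A=(x_{i_1,\dots,i_n})$ the generic table. For a tuple $\sigma$ with $\sigma_j\in\{1,\dots,a_j\}\cup\{+\}$, $x_\sigma$ is the sum of all $x_{i_1,\dots,i_n}$ with $i_j=\sigma_j$ whenever $\sigma_j\ne+$. For $\mathscr J=\{j_1<\dots<j_m\}\subseteq\{1,\dots,n\}$, the margin $A_{\mathscr J}$ is the $a_{j_1}\times\dots\times a_{j_m}$ table whose $(i_1,\dots,i_m)$ entry is $x_\sigma$ with $\sigma_{j_r}=i_r$ and $\sigma_j=+$ for $j\notin\mathscr J$; $L_{\mathscr J}\subseteq R$ is the ideal generated by the entries of $A_{\mathscr J}$ (so $L_\emptyset=(x_{+,\dots,+})$). For a table $B$ with entries in $R$, $I(B)$ is the ideal generated by all generalized $2\times2$ minors of $B$ (determinants $\det\begin{pmatrix} b_{i} & b_{j_1,\dots,i_l,\dots,j_m}\\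 b_{i_1,\dots,j_l,\dots,i_m} & b_{j}\end{pmatrix}$ interchanging one coordinate $l$), and $I_\Delta=\sum_{\mathscr J\in\Delta}I(A_{\mathscr J})$. A simplicial complex is a nonempty family of subsets of $\{1,\dots,n\}$ closed under subsets. $S_\Delta$ is the polynomial ring over $\mathbb K$ in variables $X_\sigma$ for tuples $\sigma$ with $\sigma_j\in\{1,\dots,a_j\}\cup\{\bullet\}$ and $\{j:\sigma_j\ne\bullet\}\in\Delta$; $X_\sigma$ is said to be an entry of the margin $\{j:\sigma_j\ne\bullet\}$. $\tau_\Delta:S_\Delta\to R$ sends $X_\sigma\mapsto x_{\sigma''}$ ($\bullet$ replaced by $+$). $\eta_\Delta:S_\Delta\to\mathbb K[y_{j,i}:1\le j\le n,\ i\in\{1,\dots,a_j\}\cup\{\bullet\}]$ (the $y_{j,\bullet}$ being independent variables) sends $X_\sigma\mapsto\prod_{j}y_{j,\sigma_j}$, and $Q_\Delta=\ker\eta_\Delta$. *)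

theory Defs
  imports Main "HOL-Library.Poly_Mapping"
begin

type_synonym ('v,'k) mpoly = "('v \<Rightarrow>\<^sub>0 nat) \<Rightarrow>\<^sub>0 'k"

definition pvar :: "'v \<Rightarrow> ('v,'k::comm_ring_1) mpoly" where
  "pvar v = Poly_Mapping.single (Poly_Mapping.single v 1) 1"

definition poly_ring :: "'v set \<Rightarrow> ('v,'k::comm_ring_1) mpoly set" where
  "poly_ring V = {p. \<forall>m\<in>Poly_Mapping.keys p. Poly_Mapping.keys m \<subseteq> V}"

definition peval :: "('v \<Rightarrow> ('w,'k::comm_ring_1) mpoly) \<Rightarrow> ('v,'k) mpoly \<Rightarrow> ('w,'k) mpoly" where
  "peval g p = (\<Sum>m\<in>Poly_Mapping.keys p. Poly_Mapping.single 0 (Poly_Mapping.lookup p m) * (\<Prod>v\<in>Poly_Mapping.keys m. g v ^ Poly_Mapping.lookup m v))"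

definition gen_ideal :: "'v set \<Rightarrow> ('v,'k::comm_ring_1) mpoly set \<Rightarrow> ('v,'k) mpoly set" where
  "gen_ideal V G = {x. \<exists>F c. finite F \<and> F \<subseteq> G \<and> (\<forall>s\<in>F. c s \<in> poly_ring V)
                          \<and> x = (\<Sum>s\<in>F. c s * s)}"

text \<open>Conventions: coordinates are indexed by j \<in> {0..<n} (0-based instead of 1..n);
  values of coordinate j range over {1..a j}. A tuple \<sigma> with entries in {1..a j} \<union> {+} (or \<bullet>) is a
  list of length n of type nat option, with None standing for + (resp. \<bullet>).\<close>

definition cells :: "nat \<Rightarrow> (nat \<Rightarrow> nat) \<Rightarrow> nat list set" where
  "cells n a = {c. length c = n \<and> (\<forall>j<n. 1 \<le> c!j \<and> c!j \<le> a j)}"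

definition tuples :: "nat \<Rightarrow> (nat \<Rightarrow> nat) \<Rightarrow> nat option list set" where
  "tuples n a = {\<sigma>. length \<sigma> = n \<and> (\<forall>j<n. \<forall>i. \<sigma>!j = Some i \<longrightarrow> 1 \<le> i \<and> i \<le> a j)}"

definition supp :: "nat option list \<Rightarrow> nat set" where
  "supp \<sigma> = {j. j < length \<sigma> \<and> \<sigma>!j \<noteq> None}"

definition xsum :: "nat \<Rightarrow> (nat \<Rightarrow> nat) \<Rightarrow> nat option list \<Rightarrow> (nat list,'k::comm_ring_1) mpoly" where
  "xsum n a \<sigma> = (\<Sum>c\<in>{c\<in>cells n a. \<forall>j<n. \<forall>i. \<sigma>!j = Some i \<longrightarrow> c!j = i}. pvar c)"

definition Rring :: "nat \<Rightarrow> (nat \<Rightarrow> nat) \<Rightarrow> (nat list,'k::comm_ring_1) mpoly set" where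
  "Rring n a = poly_ring (cells n a)"

definition Lideal :: "nat \<Rightarrow> (nat \<Rightarrow> nat) \<Rightarrow> nat set \<Rightarrow> (nat list,'k::comm_ring_1) mpoly set" where
  "Lideal n a J = gen_ideal (cells n a) {xsum n a \<sigma> | \<sigma>. \<sigma> \<in> tuples n a \<and> supp \<sigma> = J}"

text \<open>Generalized 2x2 minors of the margin A_J: for entries indexed by \<sigma>, \<rho> (of support J)
  and a coordinate l \<in> J, the determinant
  det [[b_\<sigma>, b_(\<rho> with l-th coord \<sigma>_l)], [b_(\<sigma> with l-th coord \<rho>_l), b_\<rho>]].\<close>
definition margin_minors :: "nat \<Rightarrow> (nat \<Rightarrow> nat) \<Rightarrow> nat set \<Rightarrow> (nat list,'k::comm_ring_1) mpoly set" where
  "margin_minors n a J = {xsum n a \<sigma> * xsum n a \<rho> - xsum n a (\<rho>[l := \<sigma>!l]) * xsum n a (\<sigma>[l := \<rho>!l])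
      | \<sigma> \<rho> l. \<sigma> \<in> tuples n a \<and> \<rho> \<in> tuples n a \<and> supp \<sigma> = J \<and> supp \<rho> = J \<and> l \<in> J}"

definition I_Delta :: "nat \<Rightarrow> (nat \<Rightarrow> nat) \<Rightarrow> nat set set \<Rightarrow> (nat list,'k::comm_ring_1) mpoly set" where
  "I_Delta n a \<Delta> = gen_ideal (cells n a) (\<Union>J\<in>\<Delta>. margin_minors n a J)"

definition simplicial_complex :: "nat \<Rightarrow> nat set set \<Rightarrow> bool" where
  "simplicial_complex n \<Delta> \<longleftrightarrow> \<Delta> \<noteq> {} \<and> (\<forall>F\<in>\<Delta>. F \<subseteq> {0..<n}) \<and> (\<forall>F\<in>\<Delta>. \<forall>G. G \<subseteq> F \<longrightarrow> G \<in> \<Delta>)"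

definition Svars :: "nat \<Rightarrow> (nat \<Rightarrow> nat) \<Rightarrow> nat set set \<Rightarrow> nat option list set" where
  "Svars n a \<Delta> = {\<sigma>\<in>tuples n a. supp \<sigma> \<in> \<Delta>}"

definition Sring :: "nat \<Rightarrow> (nat \<Rightarrow> nat) \<Rightarrow> nat set set \<Rightarrow> (nat option list,'k::comm_ring_1) mpoly set" where
  "Sring n a \<Delta> = poly_ring (Svars n a \<Delta>)"

definition tau :: "nat \<Rightarrow> (nat \<Rightarrow> nat) \<Rightarrow> (nat option list,'k::comm_ring_1) mpoly \<Rightarrow> (nat list,'k) mpoly" where
  "tau n a f = peval (xsum n a) f"

definition eta :: "nat \<Rightarrow> (nat option list,'k::comm_ring_1) mpoly \<Rightarrow> (nat \<times> nat option,'k) mpoly" where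
  "eta n f = peval (\<lambda>\<sigma>. \<Prod>j<n. pvar (j, \<sigma>!j)) f"

definition Q_Delta :: "nat \<Rightarrow> (nat \<Rightarrow> nat) \<Rightarrow> nat set set \<Rightarrow> (nat option list,'k::comm_ring_1) mpoly set" where
  "Q_Delta n a \<Delta> = {f\<in>Sring n a \<Delta>. eta n f = 0}"

end

theory Submission
  imports Defs
begin

lemma poly_ring_add: "p \<in> poly_ring V \<Longrightarrow> q \<in> poly_ring V \<Longrightarrow> p + q \<in> poly_ring V"
  unfolding poly_ring_def mem_Collect_eq
proof (intro ballI)
  fix m assume "\<forall>m\<in>Poly_Mapping.keys p. Poly_Mapping.keys m \<subseteq> V" "\<forall>m\<in>Poly_Mapping.keys q. Poly_Mapping.keys m \<subseteq> V"
    "m \<in> Poly_Mapping.keys (p + q)"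
  then show "Poly_Mapping.keys m \<subseteq> V" using keys_add[of p q] by blast
qed

lemma poly_ring_0: "(0::('v,'k::comm_ring_1) mpoly) \<in> poly_ring V"
  unfolding poly_ring_def by simp

lemma poly_ring_1: "(1::('v,'k::comm_ring_1) mpoly) \<in> poly_ring V"
  unfolding poly_ring_def by simp

lemma poly_ring_uminus: "(p::('v,'k::comm_ring_1) mpoly) \<in> poly_ring V \<Longrightarrow> - p \<in> poly_ring V"
  unfolding poly_ring_def by simp

lemma keys_add_nat: "Poly_Mapping.keys ((m1::'v \<Rightarrow>\<^sub>0 nat) + m2) \<subseteq> Poly_Mapping.keys m1 \<union> Poly_Mapping.keys m2"
  by (rule keys_add)

lemma poly_ring_mult: "(p::('v,'k::comm_ring_1) mpoly) \<in> poly_ring V \<Longrightarrow> q \<in> poly_ring V \<Longrightarrow> p * q \<in> poly_ring V"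
  unfolding poly_ring_def
proof (intro CollectI ballI)
  fix m assume p: "p \<in> {p. \<forall>m\<in>Poly_Mapping.keys p. Poly_Mapping.keys m \<subseteq> V}"
    and q: "q \<in> {p. \<forall>m\<in>Poly_Mapping.keys p. Poly_Mapping.keys m \<subseteq> V}"
    and m: "m \<in> Poly_Mapping.keys (p * q)"
  have "m \<in> {a + b | a b. a \<in> Poly_Mapping.keys p \<and> b \<in> Poly_Mapping.keys q}"
    using m keys_mult[of p q] by (rule subsetD[rotated])
  then obtain m1 m2 where mm: "m = m1 + m2" "m1 \<in> Poly_Mapping.keys p" "m2 \<in> Poly_Mapping.keys q"
    by blast
  have "Poly_Mapping.keys m1 \<subseteq> V" "Poly_Mapping.keys m2 \<subseteq> V" using p q mm by auto
  then show "Poly_Mapping.keys m \<subseteq> V" using keys_add_nat[of m1 m2] mm(1) by blast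
qed

lemma poly_ring_sum: "finite F \<Longrightarrow> (\<And>s. s \<in> F \<Longrightarrow> f s \<in> poly_ring V) \<Longrightarrow> sum f F \<in> poly_ring V"
  by (induction F rule: finite_induct) (auto intro: poly_ring_add poly_ring_0)

lemma pvar_poly_ring: "v \<in> V \<Longrightarrow> (pvar v :: ('v,'k::comm_ring_1) mpoly) \<in> poly_ring V"
  unfolding poly_ring_def pvar_def by simp

lemma gen_ideal_0: "0 \<in> gen_ideal V G"
  unfolding gen_ideal_def by (rule CollectI, rule exI[of _ "{}"]) simp

lemma gen_ideal_gen: "g \<in> G \<Longrightarrow> (g::('v,'k::comm_ring_1) mpoly) \<in> gen_ideal V G"
  unfolding gen_ideal_def
  by (rule CollectI, rule exI[of _ "{g}"], rule exI[of _ "\<lambda>_. 1"]) (simp add: poly_ring_1)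

lemma gen_ideal_add:
  assumes "(x::('v,'k::comm_ring_1) mpoly) \<in> gen_ideal V G" "y \<in> gen_ideal V G"
  shows "x + y \<in> gen_ideal V G"
proof -
  obtain F1 c1 where 1: "finite F1" "F1 \<subseteq> G" "\<forall>s\<in>F1. c1 s \<in> poly_ring V" "x = (\<Sum>s\<in>F1. c1 s * s)"
    using assms(1) unfolding gen_ideal_def by blast
  obtain F2 c2 where 2: "finite F2" "F2 \<subseteq> G" "\<forall>s\<in>F2. c2 s \<in> poly_ring V" "y = (\<Sum>s\<in>F2. c2 s * s)"
    using assms(2) unfolding gen_ideal_def by blast
  define c where "c s = (if s \<in> F1 then c1 s else 0) + (if s \<in> F2 then c2 s else 0)" for s
  have "(\<Sum>s\<in>F1 \<union> F2. c s * s) = (\<Sum>s\<in>F1 \<union> F2. (if s \<in> F1 then c1 s * s else 0)) + (\<Sum>s\<in>F1 \<union> F2. (if s \<in> F2 then c2 s * s else 0))"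
    unfolding sum.distrib[symmetric] by (rule sum.cong) (auto simp: c_def distrib_right)
  also have "\<dots> = x + y"
  proof -
    have a: "(\<Sum>s\<in>F1 \<union> F2. (if s \<in> F1 then c1 s * s else 0)) = x"
      using 1 2(1) by (simp add: sum.If_cases Int_absorb1 Int_commute)
    have b: "(\<Sum>s\<in>F1 \<union> F2. (if s \<in> F2 then c2 s * s else 0)) = y"
      using 2 1(1) by (simp add: sum.If_cases Int_absorb1 Int_commute)
    show ?thesis using a b by simp
  qed
  finally have e: "x + y = (\<Sum>s\<in>F1 \<union> F2. c s * s)" by simp
  have r: "\<forall>s\<in>F1 \<union> F2. c s \<in> poly_ring V"
  proof
    fix s assume "s \<in> F1 \<union> F2"
    have "(if s \<in> F1 then c1 s else 0) \<in> poly_ring V" using 1(3) by (simp add: poly_ring_0)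
    moreover have "(if s \<in> F2 then c2 s else 0) \<in> poly_ring V" using 2(3) by (simp add: poly_ring_0)
    ultimately show "c s \<in> poly_ring V" unfolding c_def by (rule poly_ring_add)
  qed
  have f: "finite (F1 \<union> F2)" and g: "F1 \<union> F2 \<subseteq> G" using 1 2 by auto
  have "\<exists>F c. finite F \<and> F \<subseteq> G \<and> (\<forall>s\<in>F. c s \<in> poly_ring V) \<and> x + y = (\<Sum>s\<in>F. c s * s)"
    apply (rule exI[of _ "F1 \<union> F2"], rule exI[of _ c])
    using f g r e by (intro conjI)
  then show ?thesis unfolding gen_ideal_def by (rule CollectI)
qed

lemma gen_ideal_mult:
  assumes "(x::('v,'k::comm_ring_1) mpoly) \<in> gen_ideal V G" "p \<in> poly_ring V"
  shows "p * x \<in> gen_ideal V G"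
proof -
  obtain F1 c1 where 1: "finite F1" "F1 \<subseteq> G" "\<forall>s\<in>F1. c1 s \<in> poly_ring V" "x = (\<Sum>s\<in>F1. c1 s * s)"
    using assms(1) unfolding gen_ideal_def by blast
  have "p * x = (\<Sum>s\<in>F1. (p * c1 s) * s)" using 1 by (simp add: sum_distrib_left mult.assoc)
  moreover have "\<forall>s\<in>F1. p * c1 s \<in> poly_ring V" using 1 assms(2) by (auto intro: poly_ring_mult)
  ultimately show ?thesis unfolding gen_ideal_def mem_Collect_eq using 1(1,2)
    by (intro exI[of _ "F1"] exI[of _ "\<lambda>s. p * c1 s"] conjI) auto
qed

lemma gen_ideal_uminus:
  assumes "(x::('v,'k::comm_ring_1) mpoly) \<in> gen_ideal V G"
  shows "- x \<in> gen_ideal V G"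
  using gen_ideal_mult[OF assms poly_ring_uminus[OF poly_ring_1]] by simp

lemma gen_ideal_diff:
  assumes "(x::('v,'k::comm_ring_1) mpoly) \<in> gen_ideal V G" "y \<in> gen_ideal V G"
  shows "x - y \<in> gen_ideal V G"
  using gen_ideal_add[OF assms(1) gen_ideal_uminus[OF assms(2)]] by simp

lemma gen_ideal_sum:
  "finite F \<Longrightarrow> (\<And>s. s \<in> F \<Longrightarrow> (f s::('v,'k::comm_ring_1) mpoly) \<in> gen_ideal V G) \<Longrightarrow> sum f F \<in> gen_ideal V G"
  by (induction F rule: finite_induct) (auto intro: gen_ideal_add gen_ideal_0)

definition ovr :: "nat set \<Rightarrow> 'a list \<Rightarrow> 'a list \<Rightarrow> 'a list" where
  "ovr S p q = map (\<lambda>j. if j \<in> S then q!j else p!j) [0..<length p]"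

lemma ovr_length[simp]: "length (ovr S p q) = length p"
  by (simp add: ovr_def)

lemma ovr_nth[simp]: "j < length p \<Longrightarrow> ovr S p q ! j = (if j \<in> S then q!j else p!j)"
  by (simp add: ovr_def)

lemma tuples_length: "\<sigma> \<in> tuples n a \<Longrightarrow> length \<sigma> = n"
  by (simp add: tuples_def)

lemma ovr_tuples: "p \<in> tuples n a \<Longrightarrow> q \<in> tuples n a \<Longrightarrow> ovr S p q \<in> tuples n a"
  unfolding tuples_def by auto

lemma supp_ovr: "length q = length p \<Longrightarrow> supp (ovr S p q) = (supp p - S) \<union> (supp q \<inter> S)"
  unfolding supp_def by (auto split: if_splits)

lemma supp_upd_tuples: "l < length p \<Longrightarrow> ovr (insert l S) p q = (ovr S p q)[l := q!l]"
  by (rule nth_equalityI) (auto simp: nth_list_update)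

lemma finite_cells: "finite (cells n a)"
proof -
  have "cells n a \<subseteq> {xs. set xs \<subseteq> {0..(\<Sum>j<n. a j)} \<and> length xs = n}"
  proof
    fix c assume c: "c \<in> cells n a"
    have "set c \<subseteq> {0..(\<Sum>j<n. a j)}"
    proof
      fix x assume "x \<in> set c"
      then obtain j where j: "j < length c" "c!j = x" by (auto simp: in_set_conv_nth)
      then have "x \<le> a j" using c by (auto simp: cells_def)
      also have "a j \<le> (\<Sum>j<n. a j)" using j c by (intro member_le_sum) (auto simp: cells_def)
      finally show "x \<in> {0..(\<Sum>j<n. a j)}" by simp
    qed
    then show "c \<in> {xs. set xs \<subseteq> {0..(\<Sum>j<n. a j)} \<and> length xs = n}" using c by (simp add: cells_def)
  qed
  then show ?thesis by (rule finite_subset) (rule finite_lists_length_eq, simp)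
qed

lemma finite_tuples: "finite (tuples n a)"
proof -
  have "tuples n a \<subseteq> {xs. set xs \<subseteq> insert None (Some ` {0..(\<Sum>j<n. a j)}) \<and> length xs = n}"
  proof
    fix c assume c: "c \<in> tuples n a"
    have "set c \<subseteq> insert None (Some ` {0..(\<Sum>j<n. a j)})"
    proof
      fix x assume "x \<in> set c"
      then obtain j where j: "j < length c" "c!j = x" by (auto simp: in_set_conv_nth)
      show "x \<in> insert None (Some ` {0..(\<Sum>j<n. a j)})"
      proof (cases x)
        case (Some i)
        then have "i \<le> a j" using c j by (auto simp: tuples_def)
        also have "a j \<le> (\<Sum>j<n. a j)" using j c by (intro member_le_sum) (auto simp: tuples_def)
        finally show ?thesis using Some by auto
      qed simp
    qed
    then show "c \<in> {xs. set xs \<subseteq> insert None (Some ` {0..(\<Sum>j<n. a j)}) \<and> length xs = n}" using c by (simp add: tuples_def)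
  qed
  then show ?thesis by (rule finite_subset) (rule finite_lists_length_eq, simp)
qed

definition proj :: "nat set \<Rightarrow> nat list \<Rightarrow> nat option list" where
  "proj J c = map (\<lambda>j. if j \<in> J then Some (c!j) else None) [0..<length c]"

definition refines :: "nat set \<Rightarrow> nat \<Rightarrow> (nat \<Rightarrow> nat) \<Rightarrow> nat option list \<Rightarrow> nat option list set" where
  "refines J n a \<sigma> = {\<rho>\<in>tuples n a. supp \<rho> = J \<and> (\<forall>j<n. \<sigma>!j \<noteq> None \<longrightarrow> \<rho>!j = \<sigma>!j)}"

lemma xsum_decomp:
  assumes \<sigma>: "\<sigma> \<in> tuples n a" "supp \<sigma> \<subseteq> J" and J: "J \<subseteq> {0..<n}"
  shows "(xsum n a \<sigma> :: (nat list,'k::comm_ring_1) mpoly) = (\<Sum>\<rho>\<in>refines J n a \<sigma>. xsum n a \<rho>)"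
proof -
  define S0 where "S0 = {c\<in>cells n a. \<forall>j<n. \<forall>i. \<sigma>!j = Some i \<longrightarrow> c!j = i}"
  have fS0: "finite S0" using finite_cells unfolding S0_def by simp
  have fT: "finite (refines J n a \<sigma>)" using finite_tuples unfolding refines_def by simp
  have img: "proj J ` S0 \<subseteq> refines J n a \<sigma>"
  proof
    fix r assume "r \<in> proj J ` S0"
    then obtain c where c: "c \<in> S0" "r = proj J c" by auto
    have lc: "length c = n" using c by (simp add: S0_def cells_def)
    have "r \<in> tuples n a" using c lc unfolding tuples_def proj_def S0_def cells_def by auto
    moreover have "supp r = J" using c lc J unfolding supp_def proj_def by (auto split: if_splits)
    moreover have "\<forall>j<n. \<sigma>!j \<noteq> None \<longrightarrow> r!j = \<sigma>!j"
    proof (intro allI impI)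
      fix j assume j: "j < n" "\<sigma>!j \<noteq> None"
      then obtain i where i: "\<sigma>!j = Some i" by auto
      have "j \<in> J" using j \<sigma> tuples_length[OF \<sigma>(1)] unfolding supp_def by auto
      then show "r!j = \<sigma>!j" using c i j lc unfolding S0_def proj_def by auto
    qed
    ultimately show "r \<in> refines J n a \<sigma>" unfolding refines_def by simp
  qed
  have fib: "{c\<in>S0. proj J c = \<rho>} = {c\<in>cells n a. \<forall>j<n. \<forall>i. \<rho>!j = Some i \<longrightarrow> c!j = i}"
    if \<rho>: "\<rho> \<in> refines J n a \<sigma>" for \<rho>
  proof -
    have l\<rho>: "length \<rho> = n" and s\<rho>: "supp \<rho> = J" and r\<rho>: "\<forall>j<n. \<sigma>!j \<noteq> None \<longrightarrow> \<rho>!j = \<sigma>!j"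
      using \<rho> by (auto simp: refines_def tuples_def)
    show ?thesis
    proof (intro set_eqI iffI)
      fix c assume "c \<in> {c\<in>S0. proj J c = \<rho>}"
      then have c: "c \<in> cells n a" "proj J c = \<rho>" by (auto simp: S0_def)
      then have "length c = n" by (simp add: cells_def)
      then show "c \<in> {c\<in>cells n a. \<forall>j<n. \<forall>i. \<rho>!j = Some i \<longrightarrow> c!j = i}"
        using c unfolding proj_def by (auto split: if_splits)
    next
      fix c assume "c \<in> {c\<in>cells n a. \<forall>j<n. \<forall>i. \<rho>!j = Some i \<longrightarrow> c!j = i}"
      then have c: "c \<in> cells n a" "\<forall>j<n. \<forall>i. \<rho>!j = Some i \<longrightarrow> c!j = i" by auto
      have lc: "length c = n" using c by (simp add: cells_def)
      have pc: "proj J c = \<rho>"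
      proof (rule nth_equalityI)
        show "length (proj J c) = length \<rho>" using lc l\<rho> by (simp add: proj_def)
        fix j assume "j < length (proj J c)"
        then have j: "j < n" using lc by (simp add: proj_def)
        show "proj J c ! j = \<rho> ! j"
        proof (cases "j \<in> J")
          case True
          then obtain i where "\<rho>!j = Some i" using s\<rho> j l\<rho> unfolding supp_def by auto
          then show ?thesis using True c j lc by (auto simp: proj_def)
        next
          case False
          then have "\<rho>!j = None" using s\<rho> j l\<rho> unfolding supp_def by auto
          then show ?thesis using False j lc by (auto simp: proj_def)
        qed
      qed
      have "\<forall>j<n. \<forall>i. \<sigma>!j = Some i \<longrightarrow> c!j = i" using c(2) r\<rho> by fastforce
      then show "c \<in> {c\<in>S0. proj J c = \<rho>}" using c pc by (simp add: S0_def)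
    qed
  qed
  have "xsum n a \<sigma> = (\<Sum>c\<in>S0. (pvar c :: (nat list,'k) mpoly))" unfolding xsum_def S0_def by simp
  also have "\<dots> = (\<Sum>\<rho>\<in>refines J n a \<sigma>. \<Sum>c\<in>{c\<in>S0. proj J c = \<rho>}. pvar c)"
    by (rule sum.group[OF fS0 fT img, symmetric])
  also have "\<dots> = (\<Sum>\<rho>\<in>refines J n a \<sigma>. xsum n a \<rho>)"
    by (rule sum.cong) (simp_all add: fib xsum_def)
  finally show ?thesis .
qed

lemma xsum_poly_ring: "(xsum n a \<sigma> :: (nat list,'k::comm_ring_1) mpoly) \<in> poly_ring (cells n a)"
  unfolding xsum_def by (rule poly_ring_sum) (auto intro: pvar_poly_ring simp: finite_cells)

lemma minor_in_I:
  assumes "J \<in> \<Delta>" "\<sigma> \<in> tuples n a" "\<rho> \<in> tuples n a" "supp \<sigma> = J" "supp \<rho> = J" "l \<in> J"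
  shows "(xsum n a \<sigma> * xsum n a \<rho> - xsum n a (\<rho>[l := \<sigma>!l]) * xsum n a (\<sigma>[l := \<rho>!l])
      :: (nat list,'k::comm_ring_1) mpoly) \<in> I_Delta n a \<Delta>"
  unfolding I_Delta_def
  by (rule gen_ideal_gen) (use assms in \<open>auto simp: margin_minors_def\<close>)

lemma multi_swap:
  assumes J: "J \<in> \<Delta>" and \<rho>: "\<rho> \<in> tuples n a" "supp \<rho> = J" and \<alpha>: "\<alpha> \<in> tuples n a" "supp \<alpha> = J"
    and S: "finite S" "S \<subseteq> J"
  shows "(xsum n a \<rho> * xsum n a \<alpha> - xsum n a (ovr S \<rho> \<alpha>) * xsum n a (ovr S \<alpha> \<rho>)
      :: (nat list,'k::comm_ring_1) mpoly) \<in> I_Delta n a \<Delta>"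
  using S
proof (induction S rule: finite_induct)
  case empty
  have "ovr {} \<rho> \<alpha> = \<rho>" "ovr {} \<alpha> \<rho> = \<alpha>" by (auto intro: nth_equalityI)
  then show ?case by (simp add: I_Delta_def gen_ideal_0)
next
  case (insert l S)
  have ln: "length \<rho> = n" "length \<alpha> = n" using \<rho> \<alpha> by (auto simp: tuples_length)
  have lJ: "l \<in> J" using insert by auto
  then have ll: "l < n" using \<rho> ln unfolding supp_def by auto
  define \<rho>1 where "\<rho>1 = ovr S \<rho> \<alpha>"
  define \<alpha>1 where "\<alpha>1 = ovr S \<alpha> \<rho>"
  have t: "\<rho>1 \<in> tuples n a" "\<alpha>1 \<in> tuples n a" unfolding \<rho>1_def \<alpha>1_def using \<rho> \<alpha> by (auto intro: ovr_tuples)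
  have s: "supp \<rho>1 = J" "supp \<alpha>1 = J" unfolding \<rho>1_def \<alpha>1_def using \<rho> \<alpha> ln by (auto simp: supp_ovr)
  have IH: "(xsum n a \<rho> * xsum n a \<alpha> - xsum n a \<rho>1 * xsum n a \<alpha>1 :: (nat list,'k) mpoly) \<in> I_Delta n a \<Delta>"
    using insert \<rho>1_def \<alpha>1_def by simp
  have m: "(xsum n a \<rho>1 * xsum n a \<alpha>1 - xsum n a (\<alpha>1[l := \<rho>1!l]) * xsum n a (\<rho>1[l := \<alpha>1!l]) :: (nat list,'k) mpoly) \<in> I_Delta n a \<Delta>"
    by (rule minor_in_I[OF J t s lJ])
  have e1: "\<alpha>1[l := \<rho>1!l] = ovr (insert l S) \<alpha> \<rho>"
    unfolding \<alpha>1_def \<rho>1_def using ll ln insert(2) by (simp add: supp_upd_tuples)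
  have e2: "\<rho>1[l := \<alpha>1!l] = ovr (insert l S) \<rho> \<alpha>"
    unfolding \<alpha>1_def \<rho>1_def using ll ln insert(2) by (simp add: supp_upd_tuples)
  have eqn: "(xsum n a \<rho> * xsum n a \<alpha> - xsum n a (ovr (insert l S) \<rho> \<alpha>) * xsum n a (ovr (insert l S) \<alpha> \<rho>) :: (nat list,'k) mpoly)
     = (xsum n a \<rho> * xsum n a \<alpha> - xsum n a \<rho>1 * xsum n a \<alpha>1) + (xsum n a \<rho>1 * xsum n a \<alpha>1 - xsum n a (\<alpha>1[l := \<rho>1!l]) * xsum n a (\<rho>1[l := \<alpha>1!l]))"
    unfolding e1 e2 by (simp add: algebra_simps)
  show ?case
    unfolding eqn I_Delta_def by (rule gen_ideal_add[OF IH[unfolded I_Delta_def] m[unfolded I_Delta_def]])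
qed

lemma partial_swap:
  assumes J: "J \<in> \<Delta>" and \<sigma>: "\<sigma> \<in> tuples n a" "supp \<sigma> = M" "M \<subseteq> J"
    and \<alpha>: "\<alpha> \<in> tuples n a" "supp \<alpha> = J" and S: "S \<subseteq> M"
  shows "(xsum n a \<sigma> * xsum n a \<alpha> - xsum n a (ovr S \<sigma> \<alpha>) * xsum n a (ovr S \<alpha> \<sigma>)
      :: (nat list,'k::comm_ring_1) mpoly) \<in> I_Delta n a \<Delta>"
proof -
  have ln: "length \<sigma> = n" "length \<alpha> = n" using \<sigma> \<alpha> by (auto simp: tuples_length)
  have Jn: "J \<subseteq> {0..<n}" using \<alpha> ln unfolding supp_def by auto
  have "S \<subseteq> {..<n}" using S \<sigma>(2) ln unfolding supp_def by auto
  then have fS: "finite S" by (rule finite_subset) simp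
  define \<sigma>2 where "\<sigma>2 = ovr S \<sigma> \<alpha>"
  have \<sigma>2: "\<sigma>2 \<in> tuples n a" "supp \<sigma>2 = M" unfolding \<sigma>2_def using \<sigma> \<alpha> ln S by (auto simp: ovr_tuples supp_ovr)
  define T1 where "T1 = refines J n a \<sigma>"
  define T2 where "T2 = refines J n a \<sigma>2"
  have d1: "(xsum n a \<sigma> :: (nat list,'k) mpoly) = (\<Sum>\<rho>\<in>T1. xsum n a \<rho>)"
    unfolding T1_def by (rule xsum_decomp) (use \<sigma> Jn in auto)
  have d2: "(xsum n a \<sigma>2 :: (nat list,'k) mpoly) = (\<Sum>\<rho>\<in>T2. xsum n a \<rho>)"
    unfolding T2_def by (rule xsum_decomp) (use \<sigma>2 \<sigma> Jn in auto)
  have T1: "\<rho> \<in> tuples n a \<and> supp \<rho> = J \<and> length \<rho> = n \<and> (\<forall>j<n. \<sigma>!j \<noteq> None \<longrightarrow> \<rho>!j = \<sigma>!j)" if "\<rho> \<in> T1" for \<rho>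
    using that unfolding T1_def refines_def by (auto simp: tuples_length)
  have T2: "\<rho> \<in> tuples n a \<and> supp \<rho> = J \<and> length \<rho> = n \<and> (\<forall>j<n. \<sigma>2!j \<noteq> None \<longrightarrow> \<rho>!j = \<sigma>2!j)" if "\<rho> \<in> T2" for \<rho>
    using that unfolding T2_def refines_def by (auto simp: tuples_length)
  have Sin: "j \<in> S \<Longrightarrow> j < n \<and> \<sigma>!j \<noteq> None" for j using S \<sigma>(2) ln unfolding supp_def by auto
  have Sa: "j \<in> S \<Longrightarrow> \<alpha>!j \<noteq> None" for j using S \<sigma>(2,3) \<alpha>(2) ln unfolding supp_def by auto
  have reidx: "(\<Sum>\<rho>\<in>T2. xsum n a \<rho> * xsum n a (ovr S \<alpha> \<sigma>)) = (\<Sum>\<rho>\<in>T1. xsum n a (ovr S \<rho> \<alpha>) * (xsum n a (ovr S \<alpha> \<sigma>) :: (nat list,'k) mpoly))"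
  proof (rule sum.reindex_bij_witness[of _ "\<lambda>\<rho>. ovr S \<rho> \<alpha>" "\<lambda>\<rho>. ovr S \<rho> \<sigma>"])
    fix \<rho> assume r: "\<rho> \<in> T1"
    show "ovr S (ovr S \<rho> \<alpha>) \<sigma> = \<rho>"
      by (rule nth_equalityI) (use T1[OF r] Sin in auto)
    show "ovr S \<rho> \<alpha> \<in> T2"
      unfolding T2_def refines_def using T1[OF r] \<alpha> ln Sin
      by (auto simp: ovr_tuples supp_ovr \<sigma>2_def)
  next
    fix \<rho> assume r: "\<rho> \<in> T2"
    have e: "ovr S (ovr S \<rho> \<sigma>) \<alpha> = \<rho>"
      by (rule nth_equalityI) (use T2[OF r] Sin Sa ln in \<open>auto simp: \<sigma>2_def\<close>)
    then show "ovr S (ovr S \<rho> \<sigma>) \<alpha> = \<rho>" .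
    show "ovr S \<rho> \<sigma> \<in> T1"
      unfolding T1_def refines_def using T2[OF r] \<sigma> ln Sin \<alpha> S
      by (auto simp: ovr_tuples supp_ovr \<sigma>2_def)
    show "xsum n a (ovr S (ovr S \<rho> \<sigma>) \<alpha>) * xsum n a (ovr S \<alpha> \<sigma>) = xsum n a \<rho> * xsum n a (ovr S \<alpha> \<sigma>)"
      by (simp only: e)
  qed
  have "(xsum n a \<sigma> * xsum n a \<alpha> - xsum n a \<sigma>2 * xsum n a (ovr S \<alpha> \<sigma>) :: (nat list,'k) mpoly)
     = (\<Sum>\<rho>\<in>T1. xsum n a \<rho> * xsum n a \<alpha> - xsum n a (ovr S \<rho> \<alpha>) * xsum n a (ovr S \<alpha> \<rho>))"
  proof -
    have eq: "ovr S \<alpha> \<rho> = ovr S \<alpha> \<sigma>" if "\<rho> \<in> T1" for \<rho>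
      by (rule nth_equalityI) (use T1[OF that] Sin ln in auto)
    show ?thesis
      unfolding d1 d2 sum_distrib_right reidx sum_subtractf using eq by simp
  qed
  also have "\<dots> \<in> I_Delta n a \<Delta>"
    unfolding I_Delta_def
  proof (rule gen_ideal_sum)
    show "finite T1" unfolding T1_def refines_def using finite_tuples by simp
    fix \<rho> assume r: "\<rho> \<in> T1"
    show "(xsum n a \<rho> * xsum n a \<alpha> - xsum n a (ovr S \<rho> \<alpha>) * xsum n a (ovr S \<alpha> \<rho>) :: (nat list,'k) mpoly)
        \<in> gen_ideal (cells n a) (\<Union>J\<in>\<Delta>. margin_minors n a J)"
      using multi_swap[OF J _ _ \<alpha> fS, of \<rho>] T1[OF r] S \<sigma>(2,3) unfolding I_Delta_def by auto
  qed
  finally show ?thesis unfolding \<sigma>2_def .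
qed

definition mono_ev :: "('v \<Rightarrow> ('w,'k::comm_ring_1) mpoly) \<Rightarrow> ('v \<Rightarrow>\<^sub>0 nat) \<Rightarrow> ('w,'k) mpoly" where
  "mono_ev g m = (\<Prod>v\<in>Poly_Mapping.keys m. g v ^ Poly_Mapping.lookup m v)"

lemma peval_binom:
  "peval g (Poly_Mapping.single m1 1 - Poly_Mapping.single m2 1 :: ('v,'k::field) mpoly) = mono_ev g m1 - mono_ev g m2"
proof (cases "m1 = m2")
  case True
  then show ?thesis by (simp add: peval_def)
next
  case False
  let ?f = "Poly_Mapping.single m1 1 - Poly_Mapping.single m2 1 :: ('v,'k) mpoly"
  have l1: "Poly_Mapping.lookup ?f m1 = 1" using False by (simp add: lookup_minus lookup_single)
  have l2: "Poly_Mapping.lookup ?f m2 = -1" using False by (simp add: lookup_minus lookup_single)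
  have k: "Poly_Mapping.keys ?f = {m1, m2}"
  proof (intro set_eqI iffI)
    fix m assume "m \<in> Poly_Mapping.keys ?f"
    then show "m \<in> {m1, m2}" using keys_diff[of "Poly_Mapping.single m1 (1::'k)" "Poly_Mapping.single m2 1"] by auto
  next
    fix m assume "m \<in> {m1, m2}"
    then show "m \<in> Poly_Mapping.keys ?f" using l1 l2 by (auto simp: in_keys_iff)
  qed
  show ?thesis unfolding peval_def k using False l1 l2
    by (simp add: mono_ev_def single_uminus)
qed

lemma pvar_mult: "pvar a * pvar b = (Poly_Mapping.single (Poly_Mapping.single a 1 + Poly_Mapping.single b 1) 1 :: ('v,'k::comm_ring_1) mpoly)"
  unfolding pvar_def by (simp add: mult_single)

lemma mono2: "mono_ev g (Poly_Mapping.single a 1 + Poly_Mapping.single b 1) = g a * g b"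
proof (cases "a = b")
  case True
  have "Poly_Mapping.single a (1::nat) + Poly_Mapping.single a 1 = Poly_Mapping.single a 2"
    by (simp only: single_add[symmetric] one_add_one)
  then show ?thesis using True by (simp add: mono_ev_def power2_eq_square)
next
  case False
  have k: "Poly_Mapping.keys (Poly_Mapping.single a (1::nat) + Poly_Mapping.single b 1) = {a, b}"
    using False by (auto simp: in_keys_iff lookup_add lookup_single when_def split: if_splits)
  show ?thesis unfolding mono_ev_def k using False by (simp add: lookup_add lookup_single)
qed

lemma binom_eq: "(pvar a * pvar b - pvar c * pvar d :: ('v,'k::comm_ring_1) mpoly)
   = Poly_Mapping.single (Poly_Mapping.single a 1 + Poly_Mapping.single b 1) 1 - Poly_Mapping.single (Poly_Mapping.single c 1 + Poly_Mapping.single d 1) 1"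
  by (simp add: pvar_mult)

lemma peval_binom2: "peval g (pvar a * pvar b - pvar c * pvar d :: ('v,'k::field) mpoly) = g a * g b - g c * g d"
  unfolding binom_eq peval_binom mono2 ..

lemma prod_pvar: "finite A \<Longrightarrow> (\<Prod>j\<in>A. pvar (h j)) = (Poly_Mapping.single (\<Sum>j\<in>A. Poly_Mapping.single (h j) 1) 1 :: ('v,'k::comm_ring_1) mpoly)"
  by (induction A rule: finite_induct) (simp_all add: pvar_def mult_single add.commute)

lemma lookup_E: "j < n \<Longrightarrow> Poly_Mapping.lookup (\<Sum>i<n. Poly_Mapping.single (i, \<sigma>!i) (1::nat)) (j, x) = (if \<sigma>!j = x then 1 else 0)"
proof -
  assume j: "j < n"
  have "Poly_Mapping.lookup (\<Sum>i<n. Poly_Mapping.single (i, \<sigma>!i) (1::nat)) (j, x) = (\<Sum>i<n. if i = j \<and> \<sigma>!j = x then 1 else 0)"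
    unfolding lookup_sum by (rule sum.cong) (auto simp: lookup_single when_def)
  also have "\<dots> = (if \<sigma>!j = x then 1 else 0)" using j by (simp add: sum.delta)
  finally show ?thesis .
qed

lemma eta_counts:
  assumes "eta n (pvar \<alpha> * pvar \<beta> - pvar \<gamma> * pvar \<delta> :: (nat option list, 'k::field) mpoly) = 0" "j < n"
  shows "(if \<alpha>!j = x then 1 else 0) + (if \<beta>!j = x then 1 else 0) = (if \<gamma>!j = x then 1 else 0) + (if \<delta>!j = (x::nat option) then 1 else (0::nat))"
proof -
  define E where "E \<sigma> = (\<Sum>i<n. Poly_Mapping.single (i, \<sigma>!i) (1::nat))" for \<sigma> :: "nat option list"
  have h: "(\<Prod>j<n. pvar (j, \<sigma>!j)) = (Poly_Mapping.single (E \<sigma>) 1 :: (nat \<times> nat option,'k) mpoly)" for \<sigma>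
    unfolding E_def by (rule prod_pvar) simp
  have "(Poly_Mapping.single (E \<alpha>) 1 * Poly_Mapping.single (E \<beta>) 1 :: (nat \<times> nat option,'k) mpoly) = Poly_Mapping.single (E \<gamma>) 1 * Poly_Mapping.single (E \<delta>) 1"
    using assms(1) unfolding eta_def peval_binom2 h by simp
  then have "(Poly_Mapping.single (E \<alpha> + E \<beta>) 1 :: (nat \<times> nat option,'k) mpoly) = Poly_Mapping.single (E \<gamma> + E \<delta>) 1"
    by (simp add: mult_single)
  then have "E \<alpha> + E \<beta> = E \<gamma> + E \<delta>"
    by (metis inj_single injD lookup_single_eq lookup_single_not_eq one_neq_zero)
  then have "Poly_Mapping.lookup (E \<alpha> + E \<beta>) (j, x) = Poly_Mapping.lookup (E \<gamma> + E \<delta>) (j, x)" by simp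
  then show ?thesis unfolding lookup_add E_def lookup_E[OF assms(2)] .
qed

lemma core:
  fixes n :: nat and a :: "nat \<Rightarrow> nat" and \<Delta> :: "nat set set"
    and \<alpha> \<beta> \<gamma> \<delta> \<sigma> :: "nat option list" and J K :: "nat set"
  assumes "\<alpha> \<in> Svars n a \<Delta>" "\<beta> \<in> Svars n a \<Delta>" "\<gamma> \<in> Svars n a \<Delta>" "\<delta> \<in> Svars n a \<Delta>"
    and H: "\<forall>j<n. (\<alpha>!j \<noteq> \<gamma>!j \<longrightarrow> \<beta>!j = \<gamma>!j \<and> \<delta>!j = \<alpha>!j) \<and> (\<alpha>!j = \<gamma>!j \<longrightarrow> \<beta>!j = \<delta>!j)"
    and sJ: "supp \<alpha> = J" "supp \<gamma> = J" and sK: "K = supp \<beta>"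
    and \<sigma>: "\<sigma> \<in> tuples n a" "supp \<sigma> = J \<inter> K"
  shows "(xsum n a \<sigma> * (xsum n a \<alpha> * xsum n a \<beta> - xsum n a \<gamma> * xsum n a \<delta>) :: (nat list,'k::comm_ring_1) mpoly) \<in> I_Delta n a \<Delta>"
proof -
  define M where "M = J \<inter> K"
  have t: "\<alpha> \<in> tuples n a" "\<beta> \<in> tuples n a" "\<gamma> \<in> tuples n a" "\<delta> \<in> tuples n a"
    using assms(1-4) by (auto simp: Svars_def)
  have ln: "length \<alpha> = n" "length \<beta> = n" "length \<gamma> = n" "length \<delta> = n" "length \<sigma> = n"
    using t \<sigma> by (auto simp: tuples_length)
  have JD: "J \<in> \<Delta>" "K \<in> \<Delta>" using assms(1,2) sJ sK by (auto simp: Svars_def)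
  define S where "S = {j. j < n \<and> \<alpha>!j \<noteq> \<gamma>!j}"
  have SM: "S \<subseteq> M"
  proof
    fix j assume "j \<in> S"
    then have j: "j < n" "\<alpha>!j \<noteq> \<gamma>!j" by (auto simp: S_def)
    have "\<alpha>!j \<noteq> None"
    proof
      assume "\<alpha>!j = None"
      then have "j \<notin> J" using sJ(1) ln unfolding supp_def by auto
      then have "\<gamma>!j = None" using sJ(2) ln j unfolding supp_def by auto
      then show False using j \<open>\<alpha>!j = None\<close> by simp
    qed
    then have "j \<in> J" using sJ(1) ln j unfolding supp_def by auto
    moreover have "\<gamma>!j \<noteq> None" using \<open>j \<in> J\<close> sJ(2) unfolding supp_def by auto
    then have "\<beta>!j \<noteq> None" using H j by auto
    then have "j \<in> K" using sK ln j unfolding supp_def by auto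
    ultimately show "j \<in> M" unfolding M_def by simp
  qed
  define A where "A = ovr M \<sigma> \<alpha>"
  define B where "B = ovr M \<alpha> \<sigma>"
  define C where "C = ovr M \<sigma> \<gamma>"
  have A: "A \<in> tuples n a" "supp A = M" unfolding A_def using t \<sigma> ln sJ
    by (auto simp: ovr_tuples supp_ovr M_def)
  have E1: "(xsum n a \<sigma> * xsum n a \<alpha> - xsum n a A * xsum n a B :: (nat list,'k) mpoly) \<in> I_Delta n a \<Delta>"
    unfolding A_def B_def by (rule partial_swap[OF JD(1) \<sigma>(1) _ _ t(1) sJ(1)]) (use \<sigma> in \<open>auto simp: M_def\<close>)
  have E2: "(xsum n a A * xsum n a \<beta> - xsum n a (ovr S A \<beta>) * xsum n a (ovr S \<beta> A) :: (nat list,'k) mpoly) \<in> I_Delta n a \<Delta>"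
    by (rule partial_swap[OF JD(2) A(1) A(2) _ t(2) sK[symmetric] SM]) (auto simp: M_def)
  have E3: "(xsum n a \<sigma> * xsum n a \<gamma> - xsum n a C * xsum n a (ovr M \<gamma> \<sigma>) :: (nat list,'k) mpoly) \<in> I_Delta n a \<Delta>"
    unfolding C_def by (rule partial_swap[OF JD(1) \<sigma>(1) _ _ t(3) sJ(2)]) (use \<sigma> in \<open>auto simp: M_def\<close>)
  have eq1: "ovr S A \<beta> = C"
    by (rule nth_equalityI) (use ln SM H in \<open>auto simp: A_def C_def S_def\<close>)
  have eq2: "ovr S \<beta> A = \<delta>"
    by (rule nth_equalityI) (use ln SM H in \<open>auto simp: A_def S_def\<close>)
  have eq3: "ovr M \<gamma> \<sigma> = B"
    by (rule nth_equalityI) (use ln SM H in \<open>auto simp: B_def S_def\<close>)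
  have E2': "(xsum n a A * xsum n a \<beta> - xsum n a C * xsum n a \<delta> :: (nat list,'k) mpoly) \<in> I_Delta n a \<Delta>"
    using E2 unfolding eq1 eq2 .
  have E3': "(xsum n a \<sigma> * xsum n a \<gamma> - xsum n a C * xsum n a B :: (nat list,'k) mpoly) \<in> I_Delta n a \<Delta>"
    using E3 unfolding eq3 .
  have alg: "(xsum n a \<sigma> * (xsum n a \<alpha> * xsum n a \<beta> - xsum n a \<gamma> * xsum n a \<delta>) :: (nat list,'k) mpoly)
    = xsum n a \<beta> * (xsum n a \<sigma> * xsum n a \<alpha> - xsum n a A * xsum n a B)
      + (xsum n a B * (xsum n a A * xsum n a \<beta> - xsum n a C * xsum n a \<delta>)
      - xsum n a \<delta> * (xsum n a \<sigma> * xsum n a \<gamma> - xsum n a C * xsum n a B))"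
    by (simp add: algebra_simps)
  show ?thesis unfolding alg I_Delta_def
    by (intro gen_ideal_add gen_ideal_diff gen_ideal_mult xsum_poly_ring
        E1[unfolded I_Delta_def] E2'[unfolded I_Delta_def] E3'[unfolded I_Delta_def])
qed

theorem lemma4p2:
  fixes n :: nat and a :: "nat \<Rightarrow> nat" and \<Delta> :: "nat set set"
    and \<alpha> \<beta> \<gamma> \<delta> :: "nat option list" and J K :: "nat set"
  assumes "\<forall>j<n. 0 < a j"
    and "simplicial_complex n \<Delta>"
    and "\<alpha> \<in> Svars n a \<Delta>" "\<beta> \<in> Svars n a \<Delta>" "\<gamma> \<in> Svars n a \<Delta>" "\<delta> \<in> Svars n a \<Delta>"
    and "(pvar \<alpha> * pvar \<beta> - pvar \<gamma> * pvar \<delta> :: (nat option list, 'k::field) mpoly) \<in> Q_Delta n a \<Delta>"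
    and "supp \<alpha> = J" and "supp \<gamma> = J" and "K = supp \<beta>"
  shows "{g * tau n a (pvar \<alpha> * pvar \<beta> - pvar \<gamma> * pvar \<delta> :: (nat option list, 'k) mpoly) | g.
            g \<in> Lideal n a (J \<inter> K)} \<subseteq> I_Delta n a \<Delta>"
proof
  have eta0: "eta n (pvar \<alpha> * pvar \<beta> - pvar \<gamma> * pvar \<delta> :: (nat option list, 'k) mpoly) = 0"
    using assms(7) by (simp add: Q_Delta_def)
  have H: "\<forall>j<n. (\<alpha>!j \<noteq> \<gamma>!j \<longrightarrow> \<beta>!j = \<gamma>!j \<and> \<delta>!j = \<alpha>!j) \<and> (\<alpha>!j = \<gamma>!j \<longrightarrow> \<beta>!j = \<delta>!j)"
  proof (intro allI impI conjI)
    fix j assume j: "j < n"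
    note c = eta_counts[OF eta0 j]
    { assume ne: "\<alpha>!j \<noteq> \<gamma>!j"
      show "\<beta>!j = \<gamma>!j" using c[of "\<gamma>!j"] ne by (auto split: if_splits)
      show "\<delta>!j = \<alpha>!j" using c[of "\<alpha>!j"] ne by (auto split: if_splits) }
    { assume eq: "\<alpha>!j = \<gamma>!j"
      show "\<beta>!j = \<delta>!j" using c[of "\<beta>!j"] eq by (auto split: if_splits) }
  qed
  have tauf: "tau n a (pvar \<alpha> * pvar \<beta> - pvar \<gamma> * pvar \<delta> :: (nat option list, 'k) mpoly)
      = xsum n a \<alpha> * xsum n a \<beta> - xsum n a \<gamma> * xsum n a \<delta>"
    unfolding tau_def by (rule peval_binom2)
  fix x assume "x \<in> {g * tau n a (pvar \<alpha> * pvar \<beta> - pvar \<gamma> * pvar \<delta> :: (nat option list, 'k) mpoly) | g.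
            g \<in> Lideal n a (J \<inter> K)}"
  then obtain g where x: "x = g * (xsum n a \<alpha> * xsum n a \<beta> - xsum n a \<gamma> * xsum n a \<delta>)"
    and g: "g \<in> Lideal n a (J \<inter> K)" unfolding tauf by blast
  obtain F c where F: "finite F" "F \<subseteq> {xsum n a \<sigma> | \<sigma>. \<sigma> \<in> tuples n a \<and> supp \<sigma> = J \<inter> K}"
    "\<forall>s\<in>F. c s \<in> poly_ring (cells n a)" "g = (\<Sum>s\<in>F. c s * s)"
    using g unfolding Lideal_def gen_ideal_def by blast
  have "x = (\<Sum>s\<in>F. c s * (s * (xsum n a \<alpha> * xsum n a \<beta> - xsum n a \<gamma> * xsum n a \<delta>)))"
    unfolding x F(4) sum_distrib_right by (simp add: mult.assoc)
  also have "\<dots> \<in> I_Delta n a \<Delta>"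
    unfolding I_Delta_def
  proof (rule gen_ideal_sum[OF F(1)])
    fix s assume s: "s \<in> F"
    then obtain \<sigma> where \<sigma>: "s = xsum n a \<sigma>" "\<sigma> \<in> tuples n a" "supp \<sigma> = J \<inter> K" using F(2) by blast
    have sm: "s * (xsum n a \<alpha> * xsum n a \<beta> - xsum n a \<gamma> * xsum n a \<delta>) \<in> I_Delta n a \<Delta>"
      unfolding \<sigma>(1) by (rule core[OF assms(3-6) H assms(8-10) \<sigma>(2,3)])
    show "c s * (s * (xsum n a \<alpha> * xsum n a \<beta> - xsum n a \<gamma> * xsum n a \<delta>))
        \<in> gen_ideal (cells n a) (\<Union>J\<in>\<Delta>. margin_minors n a J)"
      by (rule gen_ideal_mult[OF sm[unfolded I_Delta_def]]) (use F(3) s in auto)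
  qed
  finally show "x \<in> I_Delta n a \<Delta>" .
qed

end
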